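(* Let $F$ be a field of characteristic $p>0$ which is algebraic over a finite field and has no field extension of degree $p$. Let $k=p^l$ for some integer $l\ge0$, let $u$ be a positive integer, let $c_1,\dots,c_u\in F$ be distinct, and set $$f_{k,u}(X,Y)=Y^{p^k}-Y+\frac{1}{\prod_{i=1}^u(X-c_i)}.$$ Then for every $a\in F\setminus\{c_1,\dots,c_u\}$ there exists $b\in F$ with $f_{k,u}(a,b)=0$. *)

theory Defs
  imports "HOL-Computational_Algebra.Polynomial" "HOL-Computational_Algebra.Factorial_Ring"
begin

definition is_subfield :: "'a::field set \<Rightarrow> bool" where
  "is_subfield K \<longleftrightarrow> 0 \<in> K \<and> 1 \<in> K \<and>
     (\<forall>x\<in>K. \<forall>y\<in>K. x + y \<in> K \<and> x * y \<in> K) \<and>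
     (\<forall>x\<in>K. - x \<in> K \<and> inverse x \<in> K)"

definition algebraic_over :: "'a::field set \<Rightarrow> 'a \<Rightarrow> bool" where
  "algebraic_over K x \<longleftrightarrow> (\<exists>q::'a poly. q \<noteq> 0 \<and> set (coeffs q) \<subseteq> K \<and> poly q x = 0)"

definition algebraic_over_finite_field :: "'a::field itself \<Rightarrow> bool" where
  "algebraic_over_finite_field _ \<longleftrightarrow>
     (\<exists>K::'a set. finite K \<and> is_subfield K \<and> (\<forall>x. algebraic_over K x))"

(* Every finite extension of degree a prime n
   is simple, so this is the existence of an irreducible polynomial of
   degree n over 'a, whose quotient ring is the extension of degree n. *)
definition has_extension_of_degree :: "'a::field itself \<Rightarrow> nat \<Rightarrow> bool" where
  "has_extension_of_degree _ n \<longleftrightarrow> (\<exists>g::'a poly. irreducible g \<and> degree g = n)"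

end

theory Submission
  imports Defs "HOL-Computational_Algebra.Polynomial_Factorial" "HOL-Computational_Algebra.Primes"
begin


lemma pcompose_power_left': "pcompose (r ^ n) q = (pcompose r q) ^ n"
  by (induction n) (simp_all add: pcompose_1 pcompose_mult)

lemma fermat_of_nat:
  assumes "CHAR('a::field) > 0"
  shows "(of_nat n :: 'a) ^ CHAR('a) = of_nat n"
proof (induction n)
  case 0
  then show ?case using assms by (simp add: power_0_left)
next
  case (Suc n)
  have pr: "prime CHAR('a)" using assms prime_CHAR_semidom by blast
  have "(of_nat (Suc n) :: 'a) ^ CHAR('a) = (1 + of_nat n) ^ CHAR('a)" by simp
  also have "\<dots> = 1 ^ CHAR('a) + (of_nat n) ^ CHAR('a)"
    by (rule freshmans_dream[OF pr refl])
  finally show ?case using Suc by simp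
qed

lemma shift_AS:
  fixes t c :: "'a::field"
  assumes "CHAR('a) > 0" "c ^ CHAR('a) = c"
  defines "P \<equiv> [:0,1:] ^ CHAR('a) - [:0,1:] - [:t:]"
  shows "pcompose P [:c,1:] = P"
proof -
  have pr: "prime CHAR('a::field poly)" using assms prime_CHAR_semidom by simp
  have "[:c,1:] = [:0,1:] + [:c:]" by simp
  hence "[:c,1:] ^ CHAR('a) = [:0,1:] ^ CHAR('a) + [:c:] ^ CHAR('a)"
    using freshmans_dream[OF pr, of "CHAR('a)" "[:0,1::'a:]" "[:c:]"] by simp
  also have "[:c:] ^ CHAR('a) = [:c:]" using assms(2) by (simp add: poly_const_pow)
  finally have e: "[:c,1:] ^ CHAR('a) = [:0,1:] ^ CHAR('a) + [:c:]" .
  show ?thesis unfolding P_def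
    by (simp add: pcompose_diff pcompose_power_left' e pcompose_pCons)
qed

lemma pcompose_shift_shift:
  "pcompose (pcompose A [:a,1:]) [:b,1:] = pcompose A [:a+b,1::'a::comm_ring_1:]"
  by (simp add: pcompose_assoc[symmetric] pcompose_pCons add.commute)

lemma degree_shift: "degree (pcompose A [:a,1::'a::field:]) = degree A"
  by (simp add: degree_pcompose)

lemma irreducible_shift:
  fixes A :: "'a::field poly"
  assumes "irreducible A"
  shows "irreducible (pcompose A [:c,1:])"
proof -
  have A0: "A \<noteq> 0" and Au: "\<not> is_unit A" using assms by (auto simp: irreducible_def)
  have dA: "degree A > 0" using A0 Au is_unit_iff_degree by blast
  have nz: "pcompose A [:c,1:] \<noteq> 0" using dA degree_shift[of A c] by auto
  show ?thesis
  proof (rule irreducibleI)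
    show "pcompose A [:c,1:] \<noteq> 0" by (fact nz)
    show "\<not> is_unit (pcompose A [:c,1:])" using dA degree_shift[of A c]
      using nz is_unit_iff_degree[OF nz] by simp
  next
    fix B C assume h: "pcompose A [:c,1:] = B * C"
    have "A = pcompose (pcompose A [:c,1:]) [:-c,1:]"
      by (simp add: pcompose_shift_shift)
    also have "\<dots> = pcompose B [:-c,1:] * pcompose C [:-c,1:]"
      by (simp add: h pcompose_mult)
    finally have "is_unit (pcompose B [:-c,1:]) \<or> is_unit (pcompose C [:-c,1:])"
      using assms by (auto simp: irreducible_def)
    moreover have "B \<noteq> 0" "C \<noteq> 0" using h \<open>pcompose A [:c,1:] \<noteq> 0\<close> by auto
    moreover have "pcompose B [:-c,1:] \<noteq> 0" "pcompose C [:-c,1:] \<noteq> 0"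
      using \<open>B \<noteq> 0\<close> \<open>C \<noteq> 0\<close> by (simp_all add: pcompose_eq_0_iff)
    ultimately show "is_unit B \<or> is_unit C"
      using is_unit_iff_degree degree_shift by metis
  qed
qed

lemma of_nat_inj_CHAR:
  assumes "i < CHAR('a::field)" "j < CHAR('a)" "(of_nat i :: 'a) = of_nat j"
  shows "i = j"
proof -
  have *: "k = l" if "k \<le> l" "l < CHAR('a)" "(of_nat k :: 'a) = of_nat l" for k l
  proof -
    have "(of_nat (l - k) :: 'a) = 0" using that by (simp add: of_nat_diff)
    hence "CHAR('a) dvd (l - k)" using of_nat_eq_0_iff_char_dvd by blast
    moreover have "l - k < CHAR('a)" using that by linarith
    ultimately have "l - k = 0" using dvd_imp_le by fastforce
    thus ?thesis using that by simp
  qed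
  show ?thesis using *[of i j] *[of j i] assms by (cases "i \<le> j") auto
qed

lemma shift_not_dvd:
  fixes B :: "'a::field poly"
  assumes "CHAR('a) > 0" "degree B > 0" "degree B < CHAR('a)" "c \<noteq> 0"
  shows "\<not> B dvd pcompose B [:c,1:]"
proof
  assume "B dvd pcompose B [:c,1:]"
  then obtain k where k: "pcompose B [:c,1:] = B * k" by (elim dvdE)
  have B0: "B \<noteq> 0" using assms by auto
  have "k \<noteq> 0" using k B0 degree_shift[of B c] assms(2) by auto
  hence "degree k = 0" using k degree_shift[of B c] B0 by (simp add: degree_mult_eq)
  then obtain \<kappa> where kk: "k = [:\<kappa>:]" by (metis degree_eq_zeroE)
  have kap: "\<kappa> \<noteq> 0" using kk \<open>k \<noteq> 0\<close> by simp
  have "lead_coeff (pcompose B [:c,1:]) = lead_coeff B" by (simp add: lead_coeff_comp)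
  hence "lead_coeff (B * [:\<kappa>:]) = lead_coeff B" using k kk by simp
  hence "lead_coeff B * \<kappa> = lead_coeff B" by (simp only: lead_coeff_mult) simp
  hence "\<kappa> = 1" using B0 by simp
  hence E: "pcompose B [:c,1:] = B" using k kk by simp
  have ev: "poly B (x + c) = poly B x" for x
    using arg_cong[OF E, of "\<lambda>q. poly q x"] by (simp add: poly_pcompose add.commute)
  have ev2: "poly B (of_nat m * c) = poly B 0" for m
  proof (induction m)
    case (Suc m)
    have "poly B (of_nat (Suc m) * c) = poly B (of_nat m * c + c)" by (simp add: distrib_right add.commute)
    also have "\<dots> = poly B (of_nat m * c)" by (rule ev)
    finally show ?case using Suc by simp
  qed simp
  define Q where "Q = B - [:poly B 0:]"
  have Q0: "Q \<noteq> 0" unfolding Q_def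
  proof
    assume "B - [:poly B 0:] = 0"
    hence "B = [:poly B 0:]" by simp
    hence "degree B = 0" by (metis degree_pCons_0)
    thus False using assms(2) by simp
  qed
  have dQ: "degree Q = degree B" unfolding Q_def using assms(2)
    using degree_add_eq_left[of "[:- poly B 0:]" B] by (simp add: diff_conv_add_uminus)
  have sub: "(\<lambda>m. of_nat m * c) ` {..<CHAR('a)} \<subseteq> {x. poly Q x = 0}"
    using ev2 by (auto simp: Q_def)
  have inj: "inj_on (\<lambda>m. of_nat m * c) {..<CHAR('a)}"
    using assms(4) by (auto intro!: inj_onI intro: of_nat_inj_CHAR)
  have "CHAR('a) = card ((\<lambda>m. of_nat m * c) ` {..<CHAR('a)})"
    using card_image[OF inj] by simp
  also have "\<dots> \<le> card {x. poly Q x = 0}"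
    using sub poly_roots_finite[OF Q0] by (rule card_mono[rotated])
  also have "\<dots> \<le> degree Q" using card_poly_roots_bound[OF Q0] .
  finally show False using dQ assms(3) by simp
qed

lemma degree1_root:
  fixes A :: "'a::field poly"
  assumes "degree A = 1"
  shows "\<exists>x. poly A x = 0"
proof -
  have eq: "A = [:coeff A 0, coeff A 1:]"
  proof (rule poly_eqI)
    fix n show "coeff A n = coeff [:coeff A 0, coeff A 1:] n"
      using assms coeff_eq_0[of A n] by (cases n; cases "n - 1") auto
  qed
  have "A \<noteq> 0" using assms by auto
  hence "coeff A 1 \<noteq> 0" using assms leading_coeff_0_iff[of A] by simp
  hence "poly A (- coeff A 0 / coeff A 1) = 0" by (subst eq) simp
  thus ?thesis by blast
qed


lemma bezout_gen:
  fixes a b :: "'a::field poly"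
  shows "\<exists>g u v. g = u * a + v * b \<and> g dvd a \<and> g dvd b"
proof (induction b arbitrary: a rule: measure_induct_rule[of euclidean_size])
  case (less b a)
  show ?case
  proof (cases "b = 0")
    case True
    then show ?thesis by (intro exI[of _ a] exI[of _ 1] exI[of _ 0]) simp
  next
    case False
    hence "euclidean_size (a mod b) < euclidean_size b" by (rule mod_size_less)
    then obtain g u v where g: "g = u * b + v * (a mod b)" "g dvd b" "g dvd a mod b"
      using less by blast
    have am: "a mod b = a - (a div b) * b" by (simp add: minus_div_mult_eq_mod)
    have "g = v * a + (u - v * (a div b)) * b" using g(1) am by (simp add: algebra_simps)
    moreover have "g dvd a"
    proof -
      have "a = (a div b) * b + a mod b" by simp
      moreover have "g dvd (a div b) * b + a mod b" using g(2,3) by (intro dvd_add dvd_mult)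
      ultimately show ?thesis by simp
    qed
    ultimately show ?thesis using g(2)
      by (intro exI[of _ g] exI[of _ v] exI[of _ "u - v * (a div b)"]) simp
  qed
qed

definition bez :: "'a::field poly \<Rightarrow> 'a poly \<Rightarrow> bool" where
  "bez A B \<longleftrightarrow> (\<exists>u v. u * A + v * B = 1)"

lemma bez_irr:
  fixes A B :: "'a::field poly"
  assumes "irreducible A" "\<not> A dvd B"
  shows "bez A B"
proof -
  obtain g u v where g: "g = u * A + v * B" "g dvd A" "g dvd B" using bezout_gen by blast
  have "A dvd g \<or> is_unit g" using irreducibleD'[OF assms(1) g(2)] .
  moreover have "\<not> A dvd g" using g(3) assms(2) dvd_trans by blast
  ultimately have "g dvd 1" by blast
  then obtain h where "1 = g * h" by (elim dvdE)
  hence "g * h = 1" by simp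
  hence "(h * u) * A + (h * v) * B = 1" using g(1) by (simp add: algebra_simps)
  thus ?thesis unfolding bez_def by blast
qed

lemma bez_mult:
  assumes "bez A B" "bez A C"
  shows "bez A (B * C)"
proof -
  obtain u v u' v' where e: "u * A + v * B = 1" "u' * A + v' * C = 1"
    using assms unfolding bez_def by blast
  have "(u * A + v * B) * (u' * A + v' * C) = 1" using e by simp
  hence "(u * u' * A + u * v' * C + v * B * u') * A + (v * v') * (B * C) = 1"
    by (simp add: algebra_simps)
  thus ?thesis unfolding bez_def by blast
qed

lemma bez_prod:
  assumes "\<And>i. i \<in> I \<Longrightarrow> bez A (f i)"
  shows "bez A (\<Prod>i\<in>I. f i)"
  using assms
proof (induction I rule: infinite_finite_induct)
  case (infinite I)
  have "(\<Prod>i\<in>I. f i) = 1" using infinite by simp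
  moreover have "0 * A + 1 * 1 = 1" by simp
  ultimately show ?case unfolding bez_def by metis
next
  case empty
  have "0 * A + 1 * 1 = 1" by simp
  then show ?case unfolding bez_def by (metis prod.empty)
next
  case (insert x F)
  then show ?case by (simp add: bez_mult)
qed

lemma bez_dvd:
  assumes "bez A B" "A dvd P" "B dvd P"
  shows "A * B dvd P"
proof -
  obtain u v where e: "u * A + v * B = 1" using assms unfolding bez_def by blast
  obtain a' where a': "P = A * a'" using assms(2) by (elim dvdE)
  obtain b' where b': "P = B * b'" using assms(3) by (elim dvdE)
  have "P = P * (u * A + v * B)" using e by simp
  also have "\<dots> = u * A * P + v * B * P" by (simp add: algebra_simps)
  also have "u * A * P = A * B * (u * b')" by (subst b') (simp add: algebra_simps)
  also have "v * B * P = A * B * (v * a')" by (subst a') (simp add: algebra_simps)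
  also have "A * B * (u * b') + A * B * (v * a') = A * B * (u * b' + v * a')"
    by (simp add: algebra_simps)
  finally show ?thesis by simp
qed

lemma irreducible_divisor_exists:
  fixes q :: "'a::field poly"
  assumes "degree q > 0"
  shows "\<exists>A. irreducible A \<and> A dvd q"
  using assms
proof (induction "degree q" arbitrary: q rule: less_induct)
  case less
  have q0: "q \<noteq> 0" using less.prems by auto
  have qu: "\<not> is_unit q" using less.prems is_unit_iff_degree[OF q0] by simp
  show ?case
  proof (cases "irreducible q")
    case True then show ?thesis by (intro exI[of _ q]) simp
  next
    case False
    then obtain a b where ab: "q = a * b" "\<not> is_unit a" "\<not> is_unit b"
      using q0 qu by (auto simp: irreducible_def)
    have a0: "a \<noteq> 0" and b0: "b \<noteq> 0" using ab q0 by auto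
    have da: "degree a > 0" using ab(2) is_unit_iff_degree[OF a0] by simp
    have db: "degree b > 0" using ab(3) is_unit_iff_degree[OF b0] by simp
    have "degree q = degree a + degree b" using ab(1) a0 b0 by (simp add: degree_mult_eq)
    hence "degree a < degree q" using db by simp
    then obtain A where "irreducible A" "A dvd a" using less da by blast
    thus ?thesis using ab(1) by auto
  qed
qed

lemma AS_surj:
  fixes t :: "'a::field"
  assumes pos: "CHAR('a) > 0"
    and noext: "\<not> (\<exists>g::'a poly. irreducible g \<and> degree g = CHAR('a))"
  shows "\<exists>b. b ^ CHAR('a) - b = t"
proof (rule ccontr)
  assume nr: "\<not> (\<exists>b. b ^ CHAR('a) - b = t)"
  define p where "p = CHAR('a)"
  have pr: "prime p" using pos prime_CHAR_semidom p_def by blast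
  hence p2: "p \<ge> 2" by (rule prime_ge_2_nat)
  define P :: "'a poly" where "P = [:0,1:] ^ CHAR('a) - [:0,1:] - [:t:]"
  have evP: "poly P x = x ^ p - x - t" for x by (simp add: P_def p_def poly_power)
  have P_alt: "P = [:0,1:] ^ p + (- [:t,1:])" by (simp add: P_def p_def)
  have dX: "degree ([:0,1::'a:] ^ p) = p" by (simp add: degree_power_eq)
  have "degree (- [:t,1::'a:]) = 1" by simp
  hence dP: "degree P = p" unfolding P_alt using dX p2
    by (subst degree_add_eq_left) auto
  have P0: "P \<noteq> 0" using dP p2 by auto
  obtain A where Airr: "irreducible A" and AP: "A dvd P"
    using irreducible_divisor_exists[of P] dP p2 by auto
  hence A0: "A \<noteq> 0" and Au: "\<not> is_unit A" by (auto simp: irreducible_def)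
  define d where "d = degree A"
  have d0: "d > 0" using A0 Au is_unit_iff_degree d_def by blast
  have dle: "d \<le> p" using dvd_imp_degree_le[OF AP P0] dP d_def by simp
  have dnp: "d \<noteq> p" using noext Airr d_def p_def by blast
  have dn1: "d \<noteq> 1"
  proof
    assume "d = 1"
    hence "degree A = 1" using d_def by simp
    then obtain x where "poly A x = 0" using degree1_root by blast
    hence "poly P x = 0" using AP by (metis dvd_def mult_eq_0_iff poly_mult)
    thus False using nr evP p_def by auto
  qed
  have dlt: "d < p" using dle dnp by simp
  define As where "As i = pcompose A [:of_nat i, 1:]" for i :: nat
  have shP: "pcompose P [:of_nat i,1:] = P" for i
    unfolding P_def by (rule shift_AS[OF pos fermat_of_nat[OF pos]])
  have dv: "As i dvd P" for i
  proof -
    obtain B where "P = A * B" using AP by (elim dvdE)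
    hence "P = As i * pcompose B [:of_nat i,1:]"
      using shP[of i] by (simp add: As_def pcompose_mult)
    thus ?thesis by simp
  qed
  have irr: "irreducible (As i)" for i unfolding As_def by (rule irreducible_shift[OF Airr])
  have deg: "degree (As i) = d" for i unfolding As_def d_def by (rule degree_shift)
  have bz: "bez (As j) (As i)" if "i < j" "j < p" for i j
  proof -
    have "As i = pcompose (As j) [:- of_nat (j - i), 1:]"
      using that by (simp add: As_def pcompose_shift_shift of_nat_diff)
    moreover have "(of_nat (j - i) :: 'a) \<noteq> 0"
    proof
      assume "(of_nat (j - i) :: 'a) = 0"
      hence "p dvd (j - i)" using of_nat_eq_0_iff_char_dvd p_def by blast
      moreover have "0 < j - i" "j - i < p" using that by auto
      ultimately show False using dvd_imp_le by fastforce
    qed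
    ultimately have "\<not> As j dvd As i"
      using shift_not_dvd[OF pos, of "As j" "- of_nat (j - i)"] deg d0 dlt p_def by simp
    thus ?thesis using irr bez_irr by blast
  qed
  have prod: "(\<Prod>i<m. As i) dvd P" if "m \<le> p" for m
    using that
  proof (induction m)
    case 0 then show ?case by simp
  next
    case (Suc m)
    have "bez (As m) (\<Prod>i<m. As i)"
    proof (rule bez_prod)
      fix i assume "i \<in> {..<m}"
      thus "bez (As m) (As i)" using bz[of i m] Suc.prems by simp
    qed
    moreover have "(\<Prod>i<m. As i) dvd P" using Suc by simp
    ultimately have "As m * (\<Prod>i<m. As i) dvd P"
      using dv[of m] by (intro bez_dvd)
    thus ?case by (simp add: mult.commute)
  qed
  have nz: "As i \<noteq> 0" for i using irr[of i] by (auto simp: irreducible_def)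
  have "degree (\<Prod>i<p. As i) = (\<Sum>i<p. degree (As i))"
    using nz by (intro degree_prod_eq_sum_degree) auto
  also have "\<dots> = p * d" using deg by simp
  finally have e1: "degree (\<Prod>i<p. As i) = p * d" .
  have "degree (\<Prod>i<p. As i) \<le> degree P"
    by (rule dvd_imp_degree_le[OF prod[OF order.refl] P0])
  hence "p * d \<le> p * 1" using e1 dP by linarith
  hence "d \<le> 1" using p2 by (subst (asm) mult_le_cancel1) simp
  thus False using d0 dn1 by simp
qed



definition cf :: "nat \<Rightarrow> nat \<Rightarrow> 'a::comm_ring_1" where
  "cf n j = (-1) ^ (n - j) * of_nat (n choose j)"

lemma cf_Suc0: "cf (Suc n) 0 = - cf n 0"
  by (simp add: cf_def)

lemma cf_big: "n < j \<Longrightarrow> cf n j = 0"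
  unfolding cf_def by (subst binomial_eq_0) auto

lemma cf_SucSuc: "j \<le> n \<Longrightarrow> cf (Suc n) (Suc j) = cf n j - cf n (Suc j)"
proof (cases "j < n")
  case True
  hence e: "n - j = Suc (n - Suc j)" by simp
  show ?thesis unfolding cf_def using e by (simp add: algebra_simps)
next
  case False
  assume "j \<le> n"
  hence "j = n" using False by simp
  thus ?thesis unfolding cf_def by (subst (2) binomial_eq_0) auto
qed

lemma iter_formula:
  fixes x :: "'a::comm_ring_1" and Q :: nat
  assumes cfix: "\<And>n j. (cf n j :: 'a) ^ Q = cf n j"
    and sumQ: "\<And>f (A :: nat set). (sum f A :: 'a) ^ Q = (\<Sum>i\<in>A. f i ^ Q)"
  shows "((\<lambda>y. y ^ Q - y) ^^ n) x = (\<Sum>j\<le>n. cf n j * x ^ (Q ^ j))"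
proof (induction n)
  case 0
  then show ?case by (simp add: cf_def)
next
  case (Suc n)
  define S where "S = (\<Sum>j\<le>n. cf n j * x ^ (Q ^ j))"
  have "S ^ Q = (\<Sum>j\<le>n. (cf n j * x ^ (Q ^ j)) ^ Q)" unfolding S_def by (rule sumQ)
  also have "\<dots> = (\<Sum>j\<le>n. cf n j * x ^ (Q ^ Suc j))"
  proof (rule sum.cong)
    fix j
    have "(cf n j * x ^ (Q ^ j)) ^ Q = cf n j ^ Q * (x ^ (Q ^ j)) ^ Q" by (rule power_mult_distrib)
    also have "\<dots> = cf n j * x ^ (Q ^ j * Q)" by (simp add: cfix power_mult)
    finally show "(cf n j * x ^ (Q ^ j)) ^ Q = cf n j * x ^ (Q ^ Suc j)" by (simp add: mult.commute)
  qed simp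
  finally have SQ: "S ^ Q = (\<Sum>j\<le>n. cf n j * x ^ (Q ^ Suc j))" .
  have S2: "S = cf n 0 * x + (\<Sum>j\<le>n. cf n (Suc j) * x ^ (Q ^ Suc j))"
  proof -
    have "(\<Sum>j\<le>Suc n. cf n j * x ^ (Q ^ j)) = S + cf n (Suc n) * x ^ (Q ^ Suc n)"
      by (simp add: S_def)
    also have "\<dots> = S" by (simp add: cf_big)
    finally show ?thesis by (simp add: sum.atMost_Suc_shift del: sum.atMost_Suc)
  qed
  have "(\<Sum>j\<le>Suc n. cf (Suc n) j * x ^ (Q ^ j))
      = cf (Suc n) 0 * x + (\<Sum>j\<le>n. cf (Suc n) (Suc j) * x ^ (Q ^ Suc j))"
    by (simp add: sum.atMost_Suc_shift del: sum.atMost_Suc)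
  also have "(\<Sum>j\<le>n. cf (Suc n) (Suc j) * x ^ (Q ^ Suc j))
      = (\<Sum>j\<le>n. cf n j * x ^ (Q ^ Suc j)) - (\<Sum>j\<le>n. cf n (Suc j) * x ^ (Q ^ Suc j))"
    by (simp add: cf_SucSuc algebra_simps flip: sum_subtractf)
  finally have "(\<Sum>j\<le>Suc n. cf (Suc n) j * x ^ (Q ^ j)) = S ^ Q - S"
    using SQ S2 by (simp add: cf_Suc0)
  moreover have "((\<lambda>y. y ^ Q - y) ^^ Suc n) x = S ^ Q - S"
    using Suc by (simp add: S_def)
  ultimately show ?case by simp
qed


lemma pow_fix_of_nat:
  assumes "CHAR('a::field) > 0"
  shows "(of_nat n :: 'a) ^ (CHAR('a) ^ m) = of_nat n"
proof (induction m)
  case 0 then show ?case by simp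
next
  case (Suc m)
  have "(of_nat n :: 'a) ^ (CHAR('a) ^ Suc m) = ((of_nat n :: 'a) ^ CHAR('a)) ^ (CHAR('a) ^ m)"
    by (simp add: power_mult)
  also have "\<dots> = of_nat n" using fermat_of_nat[OF assms] Suc by simp
  finally show ?case .
qed

lemma pow_neg:
  assumes "CHAR('a::field) > 0"
  shows "(- x :: 'a) ^ (CHAR('a) ^ m) = - (x ^ (CHAR('a) ^ m))"
proof -
  have pr: "prime CHAR('a)" using assms prime_CHAR_semidom by blast
  have "(x + - x) ^ (CHAR('a) ^ m) = x ^ (CHAR('a) ^ m) + (- x) ^ (CHAR('a) ^ m)"
    by (rule freshmans_dream'[OF pr refl])
  moreover have "(x + - x) ^ (CHAR('a) ^ m) = 0" using assms by simp
  ultimately show ?thesis by (simp add: add_eq_0_iff)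
qed

lemma cf_fix:
  assumes "CHAR('a::field) > 0"
  shows "(cf n j :: 'a) ^ (CHAR('a) ^ m) = cf n j"
proof -
  define Q where "Q = CHAR('a) ^ m"
  have m1: "(-1 :: 'a) ^ Q = -1" using pow_neg[OF assms, of 1 m] by (simp add: Q_def)
  have "(cf n j :: 'a) ^ Q = ((-1) ^ (n - j)) ^ Q * (of_nat (n choose j)) ^ Q"
    by (simp add: cf_def power_mult_distrib)
  also have "((-1 :: 'a) ^ (n - j)) ^ Q = ((-1) ^ Q) ^ (n - j)"
    by (simp add: power_mult[symmetric] mult.commute)
  also have "(of_nat (n choose j) :: 'a) ^ Q = of_nat (n choose j)"
    unfolding Q_def by (rule pow_fix_of_nat[OF assms])
  finally show ?thesis using m1 by (simp add: Q_def cf_def)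
qed

lemma iter_p:
  fixes x :: "'a::field" and m :: nat
  assumes pos: "CHAR('a) > 0"
  defines "Q \<equiv> CHAR('a) ^ m"
  shows "((\<lambda>y. y ^ Q - y) ^^ CHAR('a)) x = x ^ (Q ^ CHAR('a)) - x"
proof -
  define p where "p = CHAR('a)"
  have pr: "prime p" using pos prime_CHAR_semidom p_def by blast
  have p0: "p > 0" using pos p_def by simp
  have "((\<lambda>y. y ^ Q - y) ^^ p) x = (\<Sum>j\<le>p. cf p j * x ^ (Q ^ j))"
    by (rule iter_formula) (simp_all add: Q_def cf_fix[OF pos]
         freshmans_dream_sum'[OF prime_CHAR_semidom[OF pos] refl])
  also have "\<dots> = (\<Sum>j\<in>{0,p}. cf p j * x ^ (Q ^ j))"
  proof (intro sum.mono_neutral_right ballI)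
    fix j assume "j \<in> {..p} - {0, p}"
    hence j: "0 < j" "j < p" by auto
    have "p dvd (p choose j)" by (rule dvd_choose_prime) (use j pr in auto)
    hence "(of_nat (p choose j) :: 'a) = 0" using of_nat_eq_0_iff_char_dvd p_def by blast
    thus "cf p j * x ^ (Q ^ j) = 0" by (simp add: cf_def)
  qed auto
  also have "\<dots> = cf p 0 * x + cf p p * x ^ (Q ^ p)" using p0 by simp
  also have "cf p 0 = (-1 :: 'a)"
  proof -
    have "(-1 :: 'a) ^ p = - (1 ^ p)" using minus_power_prime_CHAR[where 'a='a, of p 1] pr p_def by simp
    thus ?thesis by (simp add: cf_def)
  qed
  also have "cf p p = (1 :: 'a)" by (simp add: cf_def)
  finally show ?thesis by (simp add: p_def)
qed

lemma surj_iter: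
  fixes f :: "'a \<Rightarrow> 'a"
  assumes "\<And>t. \<exists>b. f b = t"
  shows "\<exists>b. (f ^^ n) b = t"
proof (induction n arbitrary: t)
  case 0 then show ?case by auto
next
  case (Suc n)
  obtain y where "f y = t" using assms by blast
  moreover obtain b where "(f ^^ n) b = y" using Suc by blast
  ultimately show ?case by (intro exI[of _ b]) simp
qed

lemma surj_k:
  fixes t :: "'a::field"
  assumes pos: "CHAR('a) > 0"
    and noext: "\<not> (\<exists>g::'a poly. irreducible g \<and> degree g = CHAR('a))"
  shows "\<exists>b. b ^ (CHAR('a) ^ (CHAR('a) ^ l)) - b = t"
proof (induction l arbitrary: t)
  case 0
  then show ?case using AS_surj[OF pos noext] by simp
next
  case (Suc l)
  define Q where "Q = CHAR('a) ^ (CHAR('a) ^ l)"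
  have s: "\<And>t. \<exists>b. (\<lambda>y::'a. y ^ Q - y) b = t" using Suc by (simp add: Q_def)
  obtain b where b: "((\<lambda>y::'a. y ^ Q - y) ^^ CHAR('a)) b = t" using surj_iter[OF s] by blast
  have "((\<lambda>y::'a. y ^ Q - y) ^^ CHAR('a)) b = b ^ (Q ^ CHAR('a)) - b"
    unfolding Q_def by (rule iter_p[OF pos])
  moreover have "Q ^ CHAR('a) = CHAR('a) ^ (CHAR('a) ^ Suc l)"
    by (simp add: Q_def power_mult[symmetric] mult.commute)
  ultimately show ?case using b by metis
qed

theorem lemma3p1:
  fixes p l k u :: nat and c :: "nat \<Rightarrow> 'a::field" and a :: 'a
  assumes "CHAR('a) = p" and "p > 0"
    and "algebraic_over_finite_field TYPE('a)"
    and "\<not> has_extension_of_degree TYPE('a) p"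
    and "k = p ^ l"
    and "u > 0"
    and "inj_on c {1..u}"
    and "a \<notin> c ` {1..u}"
  shows "\<exists>b::'a. b ^ (p ^ k) - b + 1 / (\<Prod>i=1..u. (a - c i)) = 0"
proof -
  have pos: "CHAR('a) > 0" using assms(1,2) by simp
  have noext: "\<not> (\<exists>g::'a poly. irreducible g \<and> degree g = CHAR('a))"
    using assms(1,4) unfolding has_extension_of_degree_def by simp
  obtain b :: 'a where "b ^ (CHAR('a) ^ (CHAR('a) ^ l)) - b = - (1 / (\<Prod>i=1..u. (a - c i)))"
    using surj_k[OF pos noext] by blast
  hence "b ^ (p ^ k) - b + 1 / (\<Prod>i=1..u. (a - c i)) = 0" using assms(1,5) by simp
  thus ?thesis by blast
qed

end
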